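(* Let $n\ge1$, $m\ge0$, $a,b>0$, $I_{m,n,s}(x)=\int_s^x(1+t)^nt^m\,dt$, $\mu_s=\frac{(1+a)^na^mb+nI_{m,n-1,s}(a)}{I_{m,n,s}(a)}$ and $\tilde\psi_s(x)=\frac{\mu_sI_{m,n,s}(x)-nI_{m,n-1,s}(x)}{(1+x)^nx^m}$. Assume $\mu_0\le n$ and let $\lambda\in[0,a)$ be the unique solution of $\mu_\lambda(1+\lambda)=n$. Then $\tilde\psi_\lambda$ is convex on $(0,\infty)$. In particular, for all $x\in[\lambda,a]$, $\frac{b}{a}x\ge\tilde\psi_\lambda(x)$. *)

theory Defs
  imports "HOL-Analysis.Analysis"
begin

definition Iint :: "nat \<Rightarrow> nat \<Rightarrow> real \<Rightarrow> real \<Rightarrow> real" where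
  "Iint m n s x =
     (if s \<le> x then integral {s..x} (\<lambda>t. (1 + t) ^ n * t ^ m)
      else - integral {x..s} (\<lambda>t. (1 + t) ^ n * t ^ m))"

definition mu_s :: "nat \<Rightarrow> nat \<Rightarrow> real \<Rightarrow> real \<Rightarrow> real \<Rightarrow> real" where
  "mu_s m n a b s =
     ((1 + a) ^ n * a ^ m * b + real n * Iint m (n - 1) s a) / Iint m n s a"

definition psi_tilde :: "nat \<Rightarrow> nat \<Rightarrow> real \<Rightarrow> real \<Rightarrow> real \<Rightarrow> real \<Rightarrow> real" where
  "psi_tilde m n a b s x =
     (mu_s m n a b s * Iint m n s x - real n * Iint m (n - 1) s x) / ((1 + x) ^ n * x ^ m)"

end

theory Submission
  imports Defs
begin

definition G :: "nat \<Rightarrow> nat \<Rightarrow> real \<Rightarrow> real" where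
  "G m j x = (\<Sum>i\<le>j. real (j choose i) * x ^ (i + m + 1) / real (i + m + 1))"

lemma G_deriv: "(G m j has_real_derivative (1 + x) ^ j * x ^ m) (at x)"
proof -
  have "((\<lambda>x. \<Sum>i\<le>j. real (j choose i) * x ^ (i + m + 1) / real (i + m + 1))
        has_real_derivative (\<Sum>i\<le>j. real (j choose i) * x ^ (i + m))) (at x)"
  proof (rule DERIV_sum)
    fix i assume "i \<in> {..j}"
    show "((\<lambda>x. real (j choose i) * x ^ (i + m + 1) / real (i + m + 1)) has_real_derivative
      real (j choose i) * x ^ (i + m)) (at x)"
      by (rule derivative_eq_intros refl | simp)+
  qed
  moreover have "(\<Sum>i\<le>j. real (j choose i) * x ^ (i + m)) = (1 + x) ^ j * x ^ m"
  proof -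
    have "(1 + x) ^ j = (x + 1) ^ j" by (simp add: add.commute)
    also have "\<dots> = (\<Sum>i\<le>j. real (j choose i) * x ^ i)"
      by (simp add: binomial_ring)
    finally show ?thesis by (simp add: sum_distrib_right power_add mult.assoc)
  qed
  ultimately show ?thesis unfolding G_def by simp
qed

lemma Iint_G: "Iint m j s x = G m j x - G m j s"
proof -
  have fi: "((\<lambda>t. (1 + t) ^ j * t ^ m) has_integral (G m j v - G m j u)) {u..v}" if "u \<le> v" for u v
    using that
    by (intro fundamental_theorem_of_calculus)
       (auto intro: has_real_derivative_iff_has_vector_derivative[THEN iffD1, OF DERIV_subset[OF G_deriv]])
  show ?thesis
  proof (cases "s \<le> x")
    case True
    then show ?thesis unfolding Iint_def using integral_unique[OF fi[of s x]] by simp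
  next
    case False
    then show ?thesis unfolding Iint_def using integral_unique[OF fi[of x s]] by simp
  qed
qed

lemma T_nonneg:
  fixes d l K M :: real
  assumes "d \<ge> 0" "l \<ge> 0" "K \<ge> 0" "M \<ge> 0"
  defines "n \<equiv> K + 1" and "x \<equiv> l + d"
  shows "(let P = (n*x+M*(1+x))^2+n*x*x+M*(1+x)^2;
             Pp = 2*(n+M)*(n*x+M*(1+x))+2*n*x+2*M*(1+x);
             R = (1+l)*x-((n+M)*x+M)*(x-l);
             Rp = (1+l)-(n+M)*(x-l)-((n+M)*x+M)
          in P*P*(x-l)+P*((n*x+(M+1)*(1+x))*R+x*(1+x)*Rp)-Pp*x*(1+x)*R) \<ge> 0"
proof -
  have e: "(let P = (n*x+M*(1+x))^2+n*x*x+M*(1+x)^2;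
             Pp = 2*(n+M)*(n*x+M*(1+x))+2*n*x+2*M*(1+x);
             R = (1+l)*x-((n+M)*x+M)*(x-l);
             Rp = (1+l)-(n+M)*(x-l)-((n+M)*x+M)
          in P*P*(x-l)+P*((n*x+(M+1)*(1+x))*R+x*(1+x)*Rp)-Pp*x*(1+x)*R) =
    2*l*M + 2*l*M^2 + 8*l^2*M + 6*l^2*M^2 + 2*l^2*K*M + 10*l^3*M + 6*l^3*M^2 + 4*l^3*K*M + 4*l^4*M + 2*l^4*M^2 + 2*l^4*K*M + 2*d*M + 2*d*M^2 + 12*d*l*M + 10*d*l*M^2 + 2*d*l*K*M + 22*d*l^2*M + 14*d*l^2*M^2 + 8*d*l^2*K*M + 12*d*l^3*M + 6*d*l^3*M^2 + 6*d*l^3*K*M + 4*d^2*M + 4*d^2*M^2 + 14*d^2*l*M + 10*d^2*l*M^2 + 4*d^2*l*K*M + 12*d^2*l^2*M + 6*d^2*l^2*M^2 + 6*d^2*l^2*K*M + 2*d^3*M + 2*d^3*M^2 + 4*d^3*l*M + 2*d^3*l*M^2 + 2*d^3*l*K*M"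
    unfolding n_def x_def Let_def by algebra
  show ?thesis unfolding e using assms(1-4) by simp
qed

lemma T_nonneg':
  fixes x l n M :: real
  assumes "x \<ge> l" "l \<ge> 0" "n \<ge> 1" "M \<ge> 0"
  shows "0 \<le> ((n*x+M*(1+x))^2+n*x*x+M*(1+x)^2)*((n*x+M*(1+x))^2+n*x*x+M*(1+x)^2)*(x-l)
     +((n*x+M*(1+x))^2+n*x*x+M*(1+x)^2)*((n*x+(M+1)*(1+x))*((1+l)*x-((n+M)*x+M)*(x-l))
        +x*(1+x)*((1+l)-(n+M)*(x-l)-((n+M)*x+M)))
     -(2*(n+M)*(n*x+M*(1+x))+2*n*x+2*M*(1+x))*x*(1+x)*((1+l)*x-((n+M)*x+M)*(x-l))"
  using T_nonneg[of "x - l" l "n - 1" M] assms by (simp add: Let_def)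

lemma g_deriv:
  fixes x :: real
  assumes "x > 0"
  shows "((\<lambda>x. (1+x)^n * x^m) has_real_derivative (1+x)^n*x^m*(real n/(1+x) + real m/x)) (at x)"
proof -
  have D: "((\<lambda>x. (1+x)^n * x^m) has_real_derivative
     (real n*(1+x)^(n-1)*x^m + (1+x)^n*(real m*x^(m-1)))) (at x)"
    by (auto intro!: derivative_eq_intros)
  have e1: "real n*(1+x)^(n-1) = (1+x)^n * real n/(1+x)"
    using assms by (cases n) auto
  have e2: "real m*x^(m-1) = x^m * real m/x"
    using assms by (cases m) auto
  have eq: "real n*(1+x)^(n-1)*x^m + (1+x)^n*(real m*x^(m-1)) = (1+x)^n*x^m*(real n/(1+x) + real m/x)"
  proof -
    have "real n*(1+x)^(n-1)*x^m + (1+x)^n*(real m*x^(m-1)) =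
      (1+x)^n * real n/(1+x)*x^m + (1+x)^n*(x^m * real m/x)" by (simp only: e1 e2)
    also have "\<dots> = (1+x)^n*x^m*(real n/(1+x) + real m/x)"
      using assms by (simp add: field_simps)
    finally show ?thesis .
  qed
  from D show ?thesis by (simp only: eq)
qed


lemma aux1:
  fixes x p q c N l h :: real
  assumes "x > 0" "p > 0" "q > 0"
  shows "(c * p * q * (x - l) * ((1 + x) * p * q) - N * ((1 + x) * p * q * h)) / (((1 + x) * p * q) * ((1 + x) * p * q))
    = c * (x - l) / (1 + x) - h * (N / ((1 + x) * p * q))"
proof -
  define G where "G = (1 + x) * p * q"
  have G0: "G \<noteq> 0" using assms by (simp add: G_def)
  have "(c * p * q * (x - l) * G - N * (G * h)) / (G * G) = c * p * q * (x - l) / G - h * (N / G)"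
    using G0 by (simp add: field_simps)
  moreover have "c * p * q * (x - l) / G = c * (x - l) / (1 + x)"
    using assms by (simp add: G_def)
  ultimately show ?thesis unfolding G_def by simp
qed

lemma aux2:
  fixes x y c l n m w :: real
  assumes "x \<noteq> 0" "y \<noteq> 0"
  shows "(c * (1 + l) / y ^ 2 + (n / y ^ 2 + m / x ^ 2) * w - (n / y + m / x) * (c * (x - l) / y - (n / y + m / x) * w)) * (x ^ 2 * y ^ 2)
    = ((n * x + m * y) ^ 2 + n * x * x + m * y ^ 2) * w + c * x * ((1 + l) * x - (n * x + m * y) * (x - l))"
  using assms by (simp add: field_simps power2_eq_square)

lemma aux3:
  fixes c p q y l n M A A' R Rp P Pp :: real
  assumes "P \<noteq> 0" "A = (1 + y) * p * (y * q)" "A' = p * q * (n * y + (M + 1) * (1 + y))"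
  shows "c * p * q * (y - l) + (((c * A') * R + Rp * (c * A)) * P - (c * A * R) * Pp) / (P * P)
    = c * p * q * (P * P * (y - l) + P * ((n * y + (M + 1) * (1 + y)) * R + y * (1 + y) * Rp) - Pp * y * (1 + y) * R) / P ^ 2"
  using assms by (simp add: field_simps power2_eq_square)

lemma aux4:
  fixes G P N c x R :: real
  assumes "G \<noteq> 0"
  shows "P * (N / G) + c * x * R = (P * N + c * G * x * R) / G"
  using assms by (simp add: field_simps)

theorem lemma3p8:
  fixes n m :: nat and a b l :: real
  assumes "n \<ge> 1" and "a > 0" and "b > 0"
    and "mu_s m n a b 0 \<le> real n"
    and "l \<in> {0..<a}" and "mu_s m n a b l * (1 + l) = real n"
    and "\<forall>l'\<in>{0..<a}. mu_s m n a b l' * (1 + l') = real n \<longrightarrow> l' = l"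
  shows "convex_on {0<..} (psi_tilde m n a b l)
         \<and> (\<forall>x\<in>{l..a}. b / a * x \<ge> psi_tilde m n a b l x)"
proof -
  obtain k where nk: "n = Suc k" using assms(1) by (cases n) auto
  have nk1: "n - 1 = k" using nk by simp
  have rn: "real n = real k + 1" using nk by simp
  define c where "c = mu_s m n a b l"
  have hc: "c * (1 + l) = real n" using assms(6) c_def by simp
  have l0: "0 \<le> l" "l < a" using assms(5) by auto
  have cpos: "c > 0"
  proof -
    have "c * (1+l) > 0" using hc assms(1) by simp
    with l0 show ?thesis by (simp add: zero_less_mult_iff)
  qed
  define N where "N x = c*(G m n x - G m n l) - real n*(G m k x - G m k l)" for x
  define psi where "psi = psi_tilde m n a b l"
  have psi_eq: "psi x = N x / ((1+x)^n*x^m)" for x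
    by (simp add: psi_def psi_tilde_def Iint_G N_def c_def nk)
  have dN: "(N has_real_derivative c*(1+x)^k*x^m*(x-l)) (at x)" for x
  proof -
    have "((\<lambda>x. c*(G m n x - G m n l) - real n*(G m k x - G m k l)) has_real_derivative
       c*((1+x)^n*x^m - 0) - real n*((1+x)^k*x^m - 0)) (at x)"
      by (intro DERIV_diff DERIV_cmult G_deriv DERIV_const)
    moreover have "c*((1+x)^n*x^m - 0) - real n*((1+x)^k*x^m - 0)
       = c*((1+x)*(1+x)^k)*x^m - c*(1+l)*((1+x)^k*x^m)"
      using hc nk by simp
    moreover have "\<dots> = c*(1+x)^k*x^m*(x-l)" by (simp add: algebra_simps)
    ultimately show ?thesis unfolding N_def[abs_def] by simp
  qed
  have Nl: "N l = 0" by (simp add: N_def)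
  define psi' where "psi' x = c*(x-l)/(1+x) - (real n/(1+x) + real m/x) * psi x" for x
  define psi'' where "psi'' x = c*(1+l)/(1+x)^2 + (real n/(1+x)^2 + real m/x^2) * psi x
      - (real n/(1+x)+real m/x) * psi' x" for x
  have d1: "(psi has_real_derivative psi' x) (at x)" if x0: "x > 0" for x
  proof -
    have gx: "(1+x)^n*x^m \<noteq> 0" using x0 by simp
    have "((\<lambda>x. N x / ((1+x)^n*x^m)) has_real_derivative
      (c*(1+x)^k*x^m*(x-l) * ((1+x)^n*x^m) - N x * ((1+x)^n*x^m*(real n/(1+x) + real m/x)))
        / (((1+x)^n*x^m) * ((1+x)^n*x^m))) (at x)"
      by (rule DERIV_divide[OF dN g_deriv[OF x0] gx])
    moreover have "psi = (\<lambda>x. N x / ((1+x)^n*x^m))" using psi_eq by (simp add: fun_eq_iff)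
    moreover have "(c*(1+x)^k*x^m*(x-l) * ((1+x)^n*x^m) - N x * ((1+x)^n*x^m*(real n/(1+x) + real m/x)))
        / (((1+x)^n*x^m) * ((1+x)^n*x^m)) = psi' x"
      unfolding psi'_def psi_eq using x0 aux1[where x=x and p="(1+x)^k" and q="x^m" and c=c and N="N x" and l=l and h="real n/(1+x) + real m/x"]
      by (simp add: nk mult.assoc)
    ultimately show ?thesis by simp
  qed
  have d2: "(psi' has_real_derivative psi'' x) (at x)" if x0: "x > 0" for x
  proof -
    have x1: "1 + x \<noteq> 0" using x0 by simp
    have Da: "((\<lambda>x. c*(x-l)/(1+x)) has_real_derivative
       (c*(1-0)*(1+x) - c*(x-l)*(0+1))/((1+x)*(1+x))) (at x)"
      by (intro DERIV_divide DERIV_cmult DERIV_diff DERIV_ident DERIV_const DERIV_add x1)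
    have Db: "((\<lambda>x. real n/(1+x) + real m/x) has_real_derivative
       (0*(1+x) - real n*(0+1))/((1+x)*(1+x)) + (0*x - real m*1)/(x*x)) (at x)"
      using x0 by (intro DERIV_divide DERIV_add DERIV_ident DERIV_const x1) auto
    have D: "((\<lambda>x. c*(x-l)/(1+x) - (real n/(1+x) + real m/x) * psi x) has_real_derivative
       (c*(1-0)*(1+x) - c*(x-l)*(0+1))/((1+x)*(1+x)) -
       (((0*(1+x) - real n*(0+1))/((1+x)*(1+x)) + (0*x - real m*1)/(x*x)) * psi x
         + psi' x * (real n/(1+x) + real m/x))) (at x)"
      by (intro DERIV_diff DERIV_mult Da Db d1 x0)
    have e: "(c*(1-0)*(1+x) - c*(x-l)*(0+1))/((1+x)*(1+x)) -
       (((0*(1+x) - real n*(0+1))/((1+x)*(1+x)) + (0*x - real m*1)/(x*x)) * psi x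
         + psi' x * (real n/(1+x) + real m/x)) = psi'' x"
    proof -
      have "c*(1-0)*(1+x) - c*(x-l)*(0+1) = c*(1+l)" by (simp add: algebra_simps)
      then show ?thesis unfolding psi''_def by (simp add: power2_eq_square algebra_simps)
    qed
    have fe: "psi' = (\<lambda>x. c*(x-l)/(1+x) - (real n/(1+x) + real m/x) * psi x)"
      by (simp add: fun_eq_iff psi'_def)
    from D[unfolded e] show ?thesis by (simp only: fe)
  qed
  define P where "P y = (real n*y+real m*(1+y))^2+real n*y*y+real m*(1+y)^2" for y
  define R where "R y = (1+l)*y-((real n+real m)*y+real m)*(y-l)" for y
  have psi''_eq: "psi'' x * (x^2*(1+x)^2) = P x * psi x + c*x*R x" if x0: "x > 0" for x
  proof -
    have "psi'' x * (x^2*(1+x)^2) = ((real n*x+real m*(1+x))^2 + real n*x*x + real m*(1+x)^2)*psi x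
       + c*x*((1+l)*x - (real n*x+real m*(1+x))*(x-l))"
      unfolding psi''_def psi'_def
      by (rule aux2) (use x0 in auto)
    moreover have "(1+l)*x - (real n*x+real m*(1+x))*(x-l) = R x"
      unfolding R_def by (simp add: algebra_simps)
    ultimately show ?thesis unfolding P_def by simp
  qed
  have W: "P x * N x + c*((1+x)^n*x^m)*x*R x \<ge> 0" if x0: "x > 0" for x
  proof (cases "m = 0")
    case True
    define Phi0 where "Phi0 y = real n*(real n+1)*N y + c*(1+y)^n*(1+l-real n*(y-l))" for y
    have dPhi0: "(Phi0 has_real_derivative 0) (at y)" for y
    proof -
      have D: "(Phi0 has_real_derivative
         real n*(real n+1)*(c*(1+y)^k*y^m*(y-l)) + (c*(real n*((0+1)*(1+y)^(n - Suc 0)))*(1+l-real n*(y-l))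
           + (0 - real n*(1-0)) * (c*(1+y)^n))) (at y)"
        unfolding Phi0_def[abs_def]
        by (intro DERIV_add DERIV_mult DERIV_cmult DERIV_diff DERIV_power DERIV_ident DERIV_const dN)
      have "real n*(real n+1)*(c*(1+y)^k*y^m*(y-l)) + (c*(real n*((0+1)*(1+y)^(n - Suc 0)))*(1+l-real n*(y-l))
           + (0 - real n*(1-0)) * (c*(1+y)^n)) =
           real n*(1+y)^k * ((real n+1)*c*(y-l) + c*(1+l) - c*real n*(y-l) - c*(1+y))"
        using True by (simp add: nk algebra_simps)
      also have "\<dots> = 0" by (simp add: algebra_simps)
      finally show ?thesis using D by simp
    qed
    have "Phi0 x = Phi0 l" using dPhi0 by (intro DERIV_isconst_all) auto
    also have "Phi0 l = c*(1+l)^n*(1+l)" by (simp add: Phi0_def Nl)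
    finally have "Phi0 x > 0" using cpos l0 by simp
    moreover have "P x * N x + c*((1+x)^n*x^m)*x*R x = x^2 * Phi0 x"
      unfolding P_def R_def Phi0_def using True by (simp add: algebra_simps power2_eq_square)
    ultimately show ?thesis by simp
  next
    case False
    then have m0: "real m > 0" by simp
    show ?thesis
    proof (cases "x \<le> l")
      case True
      have "N x \<ge> N l"
      proof (rule DERIV_nonpos_imp_nonincreasing[of x l N])
        show "x \<le> l" by fact
        fix y assume "x \<le> y" "y \<le> l"
        then have "c*(1+y)^k*y^m*(y-l) \<le> 0" using x0 cpos
          by (intro mult_nonneg_nonpos) auto
        then show "\<exists>z. DERIV N y :> z \<and> z \<le> 0" using dN by blast
      qed
      then have Nx: "N x \<ge> 0" using Nl by simp
      have Px: "P x \<ge> 0" unfolding P_def using x0 by simp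
      have "R x = (1+l)*x + ((real n+real m)*x+real m)*(l-x)" by (simp add: R_def algebra_simps)
      also have "\<dots> \<ge> 0" using True x0 l0 by simp
      finally have Rx: "R x \<ge> 0" .
      show ?thesis using Nx Px Rx x0 cpos by simp
    next
      case False
      then have lx: "l \<le> x" by simp
      define Pp where "Pp y = 2*(real n+real m)*(real n*y+real m*(1+y))+2*real n*y+2*real m*(1+y)" for y
      define Rp where "Rp y = (1+l)-(real n+real m)*(y-l)-((real n+real m)*y+real m)" for y
      define A where "A y = (1+y)^(Suc k)*y^(Suc m)" for y :: real
      define T where "T y = P y * P y * (y - l) + P y * ((real n * y + (real m + 1) * (1 + y)) * R y
         + y * (1 + y) * Rp y) - Pp y * y * (1 + y) * R y" for y
      define Phi where "Phi y = N y + c*A y*R y/P y" for y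
      have Ppos: "P y > 0" if "y \<ge> 0" for y
      proof -
        have "P y \<ge> real m*(1+y)^2" unfolding P_def using that by simp
        moreover have "real m*(1+y)^2 > 0" using m0 that by simp
        ultimately show ?thesis by linarith
      qed
      have dP: "(P has_real_derivative Pp y) (at y)" for y
        unfolding P_def[abs_def] Pp_def
        by (auto intro!: derivative_eq_intros simp: algebra_simps power2_eq_square)
      have dR: "(R has_real_derivative Rp y) (at y)" for y
        unfolding R_def[abs_def] Rp_def
        by (auto intro!: derivative_eq_intros simp: algebra_simps)
      have dA: "(A has_real_derivative (1+y)^k*y^m*(real n*y+(real m+1)*(1+y))) (at y)" for y
      proof -
        have D: "(A has_real_derivative (of_nat (Suc k) * ((0+1)*(1+y)^(Suc k - Suc 0))) * y^(Suc m)
            + (of_nat (Suc m) * (1*y^(Suc m - Suc 0))) * (1+y)^(Suc k)) (at y)"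
          unfolding A_def[abs_def] by (intro DERIV_mult DERIV_power DERIV_add DERIV_const DERIV_ident)
        have "(of_nat (Suc k) * ((0+1)*(1+y)^(Suc k - Suc 0))) * y^(Suc m)
            + (of_nat (Suc m) * (1*y^(Suc m - Suc 0))) * (1+y)^(Suc k) = (1+y)^k*y^m*(real n*y+(real m+1)*(1+y))"
          by (simp add: nk algebra_simps)
        then show ?thesis using D by simp
      qed
      have dPhi: "(Phi has_real_derivative c*(1+y)^k*y^m*T y/(P y)^2) (at y)" if y0: "y \<ge> 0" for y
      proof -
        have D: "(Phi has_real_derivative c*(1+y)^k*y^m*(y-l) +
           (((c*((1+y)^k*y^m*(real n*y+(real m+1)*(1+y))))*R y + Rp y*(c*A y))*P y - (c*A y*R y)*Pp y)
             / (P y * P y)) (at y)"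
          unfolding Phi_def[abs_def]
          using Ppos[OF y0]
          by (intro DERIV_add dN DERIV_divide DERIV_mult DERIV_cmult dA dR dP) auto
        have "c*(1+y)^k*y^m*(y-l) +
           (((c*((1+y)^k*y^m*(real n*y+(real m+1)*(1+y))))*R y + Rp y*(c*A y))*P y - (c*A y*R y)*Pp y)
             / (P y * P y) = c*(1+y)^k*y^m*T y/(P y)^2"
          unfolding T_def
          by (rule aux3[where M="real m"]) (use Ppos[OF y0] in \<open>auto simp: A_def mult.assoc\<close>)
        then show ?thesis using D by simp
      qed
      have "Phi l \<le> Phi x"
      proof (rule DERIV_nonneg_imp_nondecreasing[OF lx])
        fix y assume y: "l \<le> y" "y \<le> x"
        then have y0: "y \<ge> 0" using l0 by simp
        have "T y \<ge> 0" unfolding T_def P_def R_def Rp_def Pp_def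
          using T_nonneg'[of l y "real n" "real m"] y l0 assms(1) by simp
        then have "c*(1+y)^k*y^m*T y/(P y)^2 \<ge> 0" using cpos y0 by simp
        then show "\<exists>z. DERIV Phi y :> z \<and> z \<ge> 0" using dPhi[OF y0] by blast
      qed
      moreover have "Phi l \<ge> 0"
      proof -
        have "R l = (1+l)*l" by (simp add: R_def)
        then have "R l \<ge> 0" using l0 by simp
        moreover have "A l \<ge> 0" using l0 by (simp add: A_def)
        ultimately show ?thesis unfolding Phi_def using Nl Ppos[OF l0(1)] cpos by simp
      qed
      ultimately have "Phi x \<ge> 0" by simp
      moreover have "P x * N x + c*((1+x)^n*x^m)*x*R x = P x * Phi x"
        unfolding Phi_def A_def using Ppos[of x] x0 nk by (simp add: field_simps)
      ultimately show ?thesis using Ppos[of x] x0 by simp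
    qed
  qed
  have convex: "convex_on {0<..} psi"
  proof (rule f''_ge0_imp_convex[where f'=psi' and f''=psi''])
    show "convex {0::real<..}" by simp
    show "DERIV psi x :> psi' x" if "x \<in> {0<..}" for x using d1 that by simp
    show "DERIV psi' x :> psi'' x" if "x \<in> {0<..}" for x using d2 that by simp
    show "psi'' x \<ge> 0" if "x \<in> {0<..}" for x
    proof -
      have x0: "x > 0" using that by simp
      have g0: "(1+x)^n*x^m > 0" using x0 by simp
      have "P x * psi x + c*x*R x = (P x * N x + c*((1+x)^n*x^m)*x*R x) / ((1+x)^n*x^m)"
        unfolding psi_eq by (rule aux4) (use g0 x0 in simp)
      also have "\<dots> \<ge> 0" using W[OF x0] g0 by simp
      finally have "psi'' x * (x^2*(1+x)^2) \<ge> 0" using psi''_eq[OF x0] by simp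
      moreover have "x^2*(1+x)^2 > 0" using x0 by simp
      ultimately show ?thesis by (simp add: zero_le_mult_iff)
    qed
  qed
  have psi_a: "psi a = b"
  proof -
    have cne: "c \<noteq> 0" using cpos by simp
    have In: "Iint m n l a \<noteq> 0"
    proof
      assume "Iint m n l a = 0"
      then have "c = 0" by (simp add: c_def mu_s_def)
      with cne show False by simp
    qed
    have ceq: "c * Iint m n l a = (1+a)^n*a^m*b + real n * Iint m (n-1) l a"
      using In by (simp add: c_def mu_s_def)
    have "psi a = (c * Iint m n l a - real n * Iint m (n-1) l a) / ((1+a)^n*a^m)"
      by (simp add: psi_def psi_tilde_def c_def)
    also have "\<dots> = b" using ceq assms(2) by simp
    finally show ?thesis .
  qed
  have psi_l: "psi l = 0" using psi_eq[of l] Nl by simp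
  have seg: "psi x \<le> (a - x) / (a - y) * psi y + (x - y) / (a - y) * b"
    if "0 < y" "y < x" "x \<le> a" for x y
  proof -
    define t where "t = (x - y) / (a - y)"
    have ay: "a - y > 0" using that by simp
    have t01: "0 \<le> t" "t \<le> 1" using that ay by (auto simp: t_def divide_simps)
    have ta: "t * (a - y) = x - y" using ay by (simp add: t_def)
    have "(1 - t) * y + t * a = y + t * (a - y)" by (simp add: algebra_simps)
    then have xe: "(1 - t) *\<^sub>R y + t *\<^sub>R a = x" using ta by simp
    have "psi ((1 - t) *\<^sub>R y + t *\<^sub>R a) \<le> (1 - t) * psi y + t * psi a"
      using convex_onD[OF convex t01] that by simp
    moreover have "1 - t = (a - x) / (a - y)" using ay unfolding t_def by (simp add: field_simps)
    ultimately show ?thesis using xe psi_a by (simp add: t_def)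
  qed
  have ineq: "psi x \<le> b / a * x" if x: "x \<in> {l..a}" for x
  proof (cases "x = 0")
    case True
    then have "l = 0" using x l0 by simp
    then have "psi x = 0" using True psi_l by simp
    then show ?thesis using True by simp
  next
    case False
    then have x0: "x > 0" using x l0 by simp
    show ?thesis
    proof (cases "l = 0")
      case False
      then have lp: "l > 0" using l0 by simp
      show ?thesis
      proof (cases "x = l")
        case True then show ?thesis using psi_l x0 assms(2,3) by simp
      next
        case False
        then have "l < x" using x by simp
        then have "psi x \<le> (a - x) / (a - l) * psi l + (x - l) / (a - l) * b"
          using seg[of l x] lp x by simp
        also have "\<dots> = b * ((x - l) / (a - l))" using psi_l by simp
        also have "\<dots> \<le> b * (x / a)"
        proof (rule mult_left_mono)
          have "l * x \<le> l * a" using x l0 by (intro mult_left_mono) auto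
          then have "(x - l) * a \<le> x * (a - l)" by (simp add: algebra_simps)
          then show "(x - l) / (a - l) \<le> x / a" using l0 assms(2)
            by (simp add: divide_simps)
          show "0 \<le> b" using assms(3) by simp
        qed
        finally show ?thesis by simp
      qed
    next
      case True
      have Ebound: "psi y \<le> c * y^2" if y0: "y > 0" for y
      proof -
        define E where "E z = c*((1+z)^k*z^(m+2)) - N z" for z :: real
        have "E 0 \<le> E y"
        proof (rule DERIV_nonneg_imp_nondecreasing[of 0 y E])
          show "0 \<le> y" using y0 by simp
          fix z :: real assume z: "0 \<le> z" "z \<le> y"
          have D: "(E has_real_derivative c*((of_nat k * ((0+1)*(1+z)^(k - Suc 0))) * z^(m+2)
              + (of_nat (m+2) * (1*z^(m+2 - Suc 0))) * (1+z)^k) - c*(1+z)^k*z^m*(z-l)) (at z)"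
            unfolding E_def[abs_def]
            by (intro DERIV_diff DERIV_cmult DERIV_mult DERIV_power DERIV_add DERIV_const DERIV_ident dN)
          have "c*((of_nat k * ((0+1)*(1+z)^(k - Suc 0))) * z^(m+2)
              + (of_nat (m+2) * (1*z^(m+2 - Suc 0))) * (1+z)^k) - c*(1+z)^k*z^m*(z-l)
              = c*(real k*(1+z)^(k - Suc 0)*z^(m+2) + (real m+1)*(z^m*z*(1+z)^k))"
            using True by (simp add: algebra_simps)
          also have "\<dots> \<ge> 0" using cpos z by simp
          finally show "\<exists>w. DERIV E z :> w \<and> w \<ge> 0" using D by blast
        qed
        moreover have "E 0 = 0" using Nl True by (simp add: E_def)
        ultimately have NB: "N y \<le> c*((1+y)^k*y^(m+2))" by (simp add: E_def)
        have g0: "(1+y)^n*y^m > 0" using y0 by simp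
        have "c * y^2 * ((1+y)^n*y^m) - c*((1+y)^k*y^(m+2)) = c*y^3*y^m*(1+y)^k"
          by (simp add: nk power_add algebra_simps power2_eq_square power3_eq_cube)
        also have "\<dots> \<ge> 0" using cpos y0 by simp
        finally have "N y \<le> c * y^2 * ((1+y)^n*y^m)" using NB by simp
        then show ?thesis unfolding psi_eq using g0 by (simp add: pos_divide_le_eq)
      qed
      define F where "F y = (a - x) / (a - y) * (c * y^2) + (x - y) / (a - y) * b" for y
      have Flim: "(F \<longlongrightarrow> (a - x) / (a - 0) * (c * 0^2) + (x - 0) / (a - 0) * b) (at_right 0)"
        unfolding F_def using assms(2) by (intro tendsto_intros) auto
      have ev: "eventually (\<lambda>y. psi x \<le> F y) (at_right 0)"
        using eventually_at_right_real[OF x0]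
      proof (rule eventually_mono)
        fix y assume "y \<in> {0<..<x}"
        then have y: "0 < y" "y < x" by auto
        have "psi x \<le> (a - x) / (a - y) * psi y + (x - y) / (a - y) * b"
          using seg[OF y] x by simp
        also have "\<dots> \<le> F y" unfolding F_def
        proof (rule add_right_mono, rule mult_left_mono)
          show "psi y \<le> c * y^2" using Ebound y by simp
          show "0 \<le> (a - x) / (a - y)" using x y by simp
        qed
        finally show "psi x \<le> F y" .
      qed
      have "psi x \<le> (a - x) / (a - 0) * (c * 0^2) + (x - 0) / (a - 0) * b"
        by (rule tendsto_le[OF trivial_limit_at_right_real Flim tendsto_const ev])
      then show ?thesis by (simp add: mult.commute)
    qed
  qed
  show ?thesis using convex ineq unfolding psi_def by auto
qed

end
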